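(* Let $A\in\mathbb{R}^{m\times n}$ be semimonotone ($A^{\dagger}\geq 0$) and let $A=U_1-V_1=U_2-V_2$ be two convergent proper nonnegative splittings of different types (one of type I and the other of type II). If $U_1^{\dagger}>U_2^{\dagger}$, then there exists $\alpha$ with $0<\alpha<1$ such that $U_2^{\dagger}\leq\alpha U_1^{\dagger}$, and $\rho(U_1^{\dagger}V_1)<\rho(U_2^{\dagger}V_2)<1$.
   Context: $A^{\dagger}$ denotes the Moore–Penrose inverse and $\rho(\cdot)$ the spectral radius. Inequalities are entrywise; $X>Y$ means every entry of $X-Y$ is positive. A splitting $A=U-V$ is proper if $R(U)=R(A)$ and $N(U)=N(A)$; it is convergent if $\rho(U^{\dagger}V)<1$. A proper splitting is a proper nonnegative splitting of type I if $U^{\dagger}V\geq 0$, and of type II if $VU^{\dagger}\geq 0$. *)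

theory Defs
  imports "Jordan_Normal_Form.Spectral_Radius" "Jordan_Normal_Form.Matrix_Kernel"
begin

definition mat_range :: "real mat \<Rightarrow> real vec set" where
  "mat_range A = {A *\<^sub>v x | x. x \<in> carrier_vec (dim_col A)}"

definition is_MP_inverse :: "real mat \<Rightarrow> real mat \<Rightarrow> bool" where
  "is_MP_inverse A X \<longleftrightarrow> X \<in> carrier_mat (dim_col A) (dim_row A) \<and>
     A * X * A = A \<and> X * A * X = X \<and>
     transpose_mat (A * X) = A * X \<and> transpose_mat (X * A) = X * A"

definition MP_inverse :: "real mat \<Rightarrow> real mat" where
  "MP_inverse A = (THE X. is_MP_inverse A X)"

definition rho :: "real mat \<Rightarrow> real" where
  "rho M = spectral_radius (map_mat complex_of_real M)"

definition mat_nonneg :: "real mat \<Rightarrow> bool" where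
  "mat_nonneg M \<longleftrightarrow> (\<forall>i<dim_row M. \<forall>j<dim_col M. 0 \<le> M $$ (i,j))"

definition mat_le :: "real mat \<Rightarrow> real mat \<Rightarrow> bool" where
  "mat_le X Y \<longleftrightarrow> dim_row X = dim_row Y \<and> dim_col X = dim_col Y \<and>
     (\<forall>i<dim_row X. \<forall>j<dim_col X. X $$ (i,j) \<le> Y $$ (i,j))"

definition mat_gt :: "real mat \<Rightarrow> real mat \<Rightarrow> bool" where
  "mat_gt X Y \<longleftrightarrow> dim_row X = dim_row Y \<and> dim_col X = dim_col Y \<and>
     (\<forall>i<dim_row X. \<forall>j<dim_col X. X $$ (i,j) > Y $$ (i,j))"

definition proper_splitting :: "real mat \<Rightarrow> real mat \<Rightarrow> real mat \<Rightarrow> bool" where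
  "proper_splitting A U V \<longleftrightarrow>
     U \<in> carrier_mat (dim_row A) (dim_col A) \<and> V \<in> carrier_mat (dim_row A) (dim_col A) \<and>
     A = U - V \<and> mat_range U = mat_range A \<and> mat_kernel U = mat_kernel A"

definition convergent_splitting :: "real mat \<Rightarrow> real mat \<Rightarrow> bool" where
  "convergent_splitting U V \<longleftrightarrow> rho (MP_inverse U * V) < 1"

definition proper_nonneg_splitting_I :: "real mat \<Rightarrow> real mat \<Rightarrow> real mat \<Rightarrow> bool" where
  "proper_nonneg_splitting_I A U V \<longleftrightarrow>
     proper_splitting A U V \<and> mat_nonneg (MP_inverse U * V)"

definition proper_nonneg_splitting_II :: "real mat \<Rightarrow> real mat \<Rightarrow> real mat \<Rightarrow> bool" where
  "proper_nonneg_splitting_II A U V \<longleftrightarrow>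
     proper_splitting A U V \<and> mat_nonneg (V * MP_inverse U)"

end

theory Submission
  imports Defs
begin


lemma massoc: fixes A B C :: "real mat" shows "dim_col A = dim_row B \<Longrightarrow> dim_col B = dim_row C \<Longrightarrow> A * B * C = A * (B * C)"
  by (rule assoc_mult_mat[of A "dim_row A" "dim_col A" B "dim_col B" C "dim_col C"]) auto

lemma mtrans: fixes A B :: "real mat" shows "dim_col A = dim_row B \<Longrightarrow> transpose_mat (A * B) = transpose_mat B * transpose_mat A"
  by (rule transpose_mult[of A "dim_row A" "dim_col A" B "dim_col B"]) auto

lemma MP_unique:
  assumes X: "is_MP_inverse A X" and Y: "is_MP_inverse A Y"
  shows "X = Y"
proof -
  from X have Xd: "dim_row X = dim_col A" "dim_col X = dim_row A" and X1: "A * X * A = A" and X2: "X * A * X = X"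
    and X3: "transpose_mat (A * X) = A * X" and X4: "transpose_mat (X * A) = X * A"
    unfolding is_MP_inverse_def by auto
  from Y have Yd: "dim_row Y = dim_col A" "dim_col Y = dim_row A" and Y1: "A * Y * A = A" and Y2: "Y * A * Y = Y"
    and Y3: "transpose_mat (A * Y) = A * Y" and Y4: "transpose_mat (Y * A) = Y * A"
    unfolding is_MP_inverse_def by auto
  note d = Xd Yd
  have AT: "transpose_mat A = transpose_mat A * (A * Y)"
  proof -
    have "transpose_mat A = transpose_mat (A * Y * A)" using Y1 by simp
    also have "\<dots> = transpose_mat A * transpose_mat (A * Y)"
      by (rule mtrans) (simp add: d)
    finally show ?thesis using Y3 by simp
  qed
  have e1: "X = X * A * Y"
  proof -
    have "X = X * (A * X)" using X2 by (simp add: massoc d)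
    also have "\<dots> = X * (transpose_mat X * transpose_mat A)"
      using X3 mtrans[of A X] d by simp
    also have "\<dots> = X * (transpose_mat X * (transpose_mat A * (A * Y)))" using AT by simp
    also have "\<dots> = X * ((A * X) * (A * Y))" 
      using X3 mtrans[of A X] d by (simp add: massoc[symmetric])
    also have "\<dots> = (X * A * X) * (A * Y)" by (simp add: massoc d)
    also have "\<dots> = X * A * Y" using X2 by (simp add: massoc d)
    finally show ?thesis .
  qed
  have AT2: "transpose_mat A = (X * A) * transpose_mat A"
  proof -
    have "transpose_mat A = transpose_mat (A * X * A)" using X1 by simp
    also have "\<dots> = transpose_mat (X * A) * transpose_mat A"
      using mtrans[of A "X*A"] d by (simp add: massoc)
    finally show ?thesis using X4 by simp
  qed
  have e2: "Y = X * A * Y"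
  proof -
    have "Y = (Y * A) * Y" using Y2 by simp
    also have "\<dots> = (transpose_mat A * transpose_mat Y) * Y"
      using Y4 mtrans[of Y A] d by simp
    also have "\<dots> = ((X * A) * transpose_mat A * transpose_mat Y) * Y" using AT2 by simp
    also have "\<dots> = ((X * A) * (Y * A)) * Y"
      using Y4 mtrans[of Y A] d by (simp add: massoc)
    also have "\<dots> = X * A * (Y * A * Y)" by (simp add: massoc d)
    also have "\<dots> = X * A * Y" using Y2 by simp
    finally show ?thesis .
  qed
  from e1 e2 show ?thesis by simp
qed



lemma sp_Suc: "v \<in> carrier_vec (Suc r) \<Longrightarrow> (w::real vec) \<bullet> v = (\<Sum>k<r. w$k * v$k) + w$r * v$r"
  unfolding scalar_prod_def by (simp add: atLeast0LessThan)

lemma sp_r: "v \<in> carrier_vec r \<Longrightarrow> (w::real vec) \<bullet> v = (\<Sum>k<r. w$k * v$k)"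
  unfolding scalar_prod_def by (simp add: atLeast0LessThan)

lemma mv_ent: "B \<in> carrier_mat m r \<Longrightarrow> i < m \<Longrightarrow> v \<in> carrier_vec r \<Longrightarrow>
  ((B::real mat) *\<^sub>v v) $ i = (\<Sum>k<r. B $$ (i,k) * v $ k)"
  by (subst index_mult_mat_vec) (auto simp: scalar_prod_def atLeast0LessThan intro!: sum.cong)

lemma mm_ent: "B \<in> carrier_mat m r \<Longrightarrow> i < m \<Longrightarrow> C \<in> carrier_mat r n \<Longrightarrow> j < n \<Longrightarrow>
  ((B::real mat) * C) $$ (i,j) = (\<Sum>k<r. B $$ (i,k) * C $$ (k,j))"
  by (subst index_mult_mat) (auto simp: scalar_prod_def atLeast0LessThan intro!: sum.cong)

lemma col_sp: "C \<in> carrier_mat r n \<Longrightarrow> j < n \<Longrightarrow> y \<in> carrier_vec r \<Longrightarrow> 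
  col (C::real mat) j \<bullet> y = (\<Sum>k<r. C $$ (k,j) * y $ k)"
  unfolding scalar_prod_def by (auto simp: atLeast0LessThan intro!: sum.cong)

lemma rank_fact:
  fixes A :: "real mat"
  assumes "A \<in> carrier_mat m n"
  shows "\<exists>r B C. B \<in> carrier_mat m r \<and> C \<in> carrier_mat r n \<and> A = B * C \<and>
     (\<forall>x\<in>carrier_vec r. B *\<^sub>v x = 0\<^sub>v m \<longrightarrow> x = 0\<^sub>v r) \<and>
     (\<forall>y\<in>carrier_vec r. (\<forall>j<n. col C j \<bullet> y = 0) \<longrightarrow> y = 0\<^sub>v r)"
  using assms
proof (induction n arbitrary: A)
  case 0
  show ?case
    by (rule exI[of _ 0], rule exI[of _ "0\<^sub>m m 0"], rule exI[of _ "0\<^sub>m 0 0"])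
       (use 0 in \<open>auto intro!: eq_matI\<close>)
next
  case (Suc n)
  define A' where "A' = mat m n (\<lambda>(i,j). A $$ (i,j))"
  define a where "a = col A n"
  have A': "A' \<in> carrier_mat m n" unfolding A'_def by auto
  have a: "a \<in> carrier_vec m" using Suc.prems unfolding a_def by auto
  have Aent: "\<And>i j. i < m \<Longrightarrow> j < Suc n \<Longrightarrow> A $$ (i,j) = (if j < n then A' $$ (i,j) else a $ i)"
    using Suc.prems unfolding A'_def a_def by (auto simp: less_Suc_eq)
  from Suc.IH[OF A'] obtain r B' C' where B': "B' \<in> carrier_mat m r" and C': "C' \<in> carrier_mat r n"
    and A'BC: "A' = B' * C'" and Binj: "\<forall>x\<in>carrier_vec r. B' *\<^sub>v x = 0\<^sub>v m \<longrightarrow> x = 0\<^sub>v r"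
    and Cinj: "\<forall>y\<in>carrier_vec r. (\<forall>j<n. col C' j \<bullet> y = 0) \<longrightarrow> y = 0\<^sub>v r" by blast
  show ?case
  proof (cases "\<exists>z\<in>carrier_vec r. B' *\<^sub>v z = a")
    case True
    then obtain z where z: "z \<in> carrier_vec r" and Bz: "B' *\<^sub>v z = a" by blast
    define C where "C = mat r (Suc n) (\<lambda>(i,j). if j < n then C' $$ (i,j) else z $ i)"
    have C: "C \<in> carrier_mat r (Suc n)" unfolding C_def by auto
    have colC: "\<And>j. j < n \<Longrightarrow> col C j = col C' j" using C' unfolding C_def
      by (auto intro!: eq_vecI)
    have colCn: "col C n = z" using z unfolding C_def by (auto intro!: eq_vecI)
    have "A = B' * C"
    proof (rule eq_matI)
      fix i j assume i: "i < dim_row (B' * C)" and j: "j < dim_col (B' * C)"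
      hence i: "i < m" and j: "j < Suc n" using B' C by auto
      show "A $$ (i,j) = (B' * C) $$ (i,j)"
      proof (cases "j < n")
        case True
        have "(B' * C) $$ (i,j) = row B' i \<bullet> col C j" using i j B' C by auto
        also have "\<dots> = (B' * C') $$ (i,j)" using colC[OF True] i True B' C' by auto
        finally show ?thesis using Aent[OF i j] True A'BC by simp
      next
        case False
        hence jn: "j = n" using j by auto
        have "(B' * C) $$ (i,j) = row B' i \<bullet> col C j" using i j B' C by auto
        also have "\<dots> = (B' *\<^sub>v z) $ i" using colCn jn i B' by auto
        finally show ?thesis using Aent[OF i j] jn Bz by simp
      qed
    qed (use Suc.prems B' C in auto)
    moreover have "\<forall>y\<in>carrier_vec r. (\<forall>j<Suc n. col C j \<bullet> y = 0) \<longrightarrow> y = 0\<^sub>v r"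
    proof (intro ballI impI)
      fix y :: "real vec" assume y: "y \<in> carrier_vec r" and h: "\<forall>j<Suc n. col C j \<bullet> y = 0"
      have "\<forall>j<n. col C' j \<bullet> y = 0" using h colC by (metis less_SucI)
      thus "y = 0\<^sub>v r" using Cinj y by blast
    qed
    ultimately show ?thesis using B' C Binj by blast
  next
    case False
    define B where "B = mat m (Suc r) (\<lambda>(i,j). if j < r then B' $$ (i,j) else a $ i)"
    define C where "C = mat (Suc r) (Suc n) (\<lambda>(i,j). if i < r then (if j < n then C' $$ (i,j) else 0)
       else (if j < n then 0 else 1))"
    have B: "B \<in> carrier_mat m (Suc r)" unfolding B_def by auto
    have C: "C \<in> carrier_mat (Suc r) (Suc n)" unfolding C_def by auto
    have "A = B * C"
    proof (rule eq_matI)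
      fix i j assume i: "i < dim_row (B * C)" and j: "j < dim_col (B * C)"
      hence i: "i < m" and j: "j < Suc n" using B C by auto
      have e: "(B * C) $$ (i,j) = (\<Sum>k<r. B' $$ (i,k) * C $$ (k,j)) + a $ i * C $$ (r,j)"
      proof -
        have "(B * C) $$ (i,j) = row B i \<bullet> col C j" using i j B C by auto
        also have "\<dots> = (\<Sum>k<r. row B i $ k * col C j $ k) + row B i $ r * col C j $ r"
          by (rule sp_Suc) (use C j in auto)
        also have "\<dots> = (\<Sum>k<r. B' $$ (i,k) * C $$ (k,j)) + a $ i * C $$ (r,j)"
          using i j B C by (auto intro!: sum.cong simp: B_def)
        finally show ?thesis .
      qed
      show "A $$ (i,j) = (B * C) $$ (i,j)"
      proof (cases "j < n")
        case True
        have "(B * C) $$ (i,j) = (\<Sum>k<r. B' $$ (i,k) * C' $$ (k,j))"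
          unfolding e using True C' unfolding C_def by auto
        also have "\<dots> = (B' * C') $$ (i,j)" by (rule mm_ent[symmetric, OF B' i C' True])
        finally show ?thesis using Aent[OF i j] True A'BC by simp
      next
        case False
        hence jn: "j = n" using j by auto
        have "(B * C) $$ (i,j) = a $ i"
          unfolding e using jn C' unfolding C_def by auto
        thus ?thesis using Aent[OF i j] jn by simp
      qed
    qed (use Suc.prems B C in auto)
    moreover have "\<forall>x\<in>carrier_vec (Suc r). B *\<^sub>v x = 0\<^sub>v m \<longrightarrow> x = 0\<^sub>v (Suc r)"
    proof (intro ballI impI)
      fix x :: "real vec" assume x: "x \<in> carrier_vec (Suc r)" and Bx: "B *\<^sub>v x = 0\<^sub>v m"
      define x' where "x' = vec r (\<lambda>i. x $ i)"
      have x': "x' \<in> carrier_vec r" unfolding x'_def by auto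
      have ent: "\<And>i. i < m \<Longrightarrow> (B' *\<^sub>v x') $ i + a $ i * x $ r = 0"
      proof -
        fix i assume i: "i < m"
        have "(B *\<^sub>v x) $ i = 0" using Bx i by simp
        moreover have "(B *\<^sub>v x) $ i = (\<Sum>k<r. B' $$ (i,k) * x $ k) + a $ i * x $ r"
        proof -
          have "(B *\<^sub>v x) $ i = (\<Sum>k<Suc r. B $$ (i,k) * x $ k)" by (rule mv_ent[OF B i x])
          also have "\<dots> = (\<Sum>k<r. B $$ (i,k) * x $ k) + B $$ (i,r) * x $ r" by simp
          also have "(\<Sum>k<r. B $$ (i,k) * x $ k) = (\<Sum>k<r. B' $$ (i,k) * x $ k)"
            using i by (auto simp: B_def intro!: sum.cong)
          finally show ?thesis using i by (simp add: B_def)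
        qed
        moreover have "(B' *\<^sub>v x') $ i = (\<Sum>k<r. B' $$ (i,k) * x $ k)"
          using mv_ent[OF B' i x'] unfolding x'_def by (simp del: index_mult_mat_vec)
        ultimately show "(B' *\<^sub>v x') $ i + a $ i * x $ r = 0" by simp
      qed
      have xr: "x $ r = 0"
      proof (rule ccontr)
        assume nz: "x $ r \<noteq> 0"
        have "B' *\<^sub>v ((- 1 / x $ r) \<cdot>\<^sub>v x') = a"
        proof (rule eq_vecI)
          fix i assume "i < dim_vec a"
          hence i: "i < m" using a by auto
          have "(B' *\<^sub>v ((- 1 / x $ r) \<cdot>\<^sub>v x')) $ i = (- 1 / x $ r) * (B' *\<^sub>v x') $ i"
            using i B' x' by (simp add: mult_mat_vec)
          also have "\<dots> = a $ i" using ent[OF i] nz by (simp add: field_simps)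
          finally show "(B' *\<^sub>v ((- 1 / x $ r) \<cdot>\<^sub>v x')) $ i = a $ i" .
        qed (use a B' in auto)
        with False x' show False by auto
      qed
      have "B' *\<^sub>v x' = 0\<^sub>v m"
        by (rule eq_vecI) (use ent xr B' in auto)
      with Binj x' have "x' = 0\<^sub>v r" by auto
      hence "\<And>i. i < r \<Longrightarrow> x $ i = 0" unfolding x'_def by (metis index_vec index_zero_vec(1))
      thus "x = 0\<^sub>v (Suc r)" using xr x by (auto intro!: eq_vecI simp: less_Suc_eq)
    qed
    moreover have "\<forall>y\<in>carrier_vec (Suc r). (\<forall>j<Suc n. col C j \<bullet> y = 0) \<longrightarrow> y = 0\<^sub>v (Suc r)"
    proof (intro ballI impI)
      fix y :: "real vec" assume y: "y \<in> carrier_vec (Suc r)" and cy: "\<forall>j<Suc n. col C j \<bullet> y = 0"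
      define y' where "y' = vec r (\<lambda>i. y $ i)"
      have y': "y' \<in> carrier_vec r" unfolding y'_def by auto
      have "col C n \<bullet> y = (\<Sum>k<Suc r. C $$ (k,n) * y $ k)" by (rule col_sp[OF C _ y]) simp
      also have "\<dots> = (\<Sum>k<r. C $$ (k,n) * y $ k) + C $$ (r,n) * y $ r" by simp
      also have "(\<Sum>k<r. C $$ (k,n) * y $ k) = 0" by (auto simp: C_def intro!: sum.neutral)
      finally have "col C n \<bullet> y = y $ r" by (simp add: C_def)
      hence yr: "y $ r = 0" using cy by auto
      have "\<forall>j<n. col C' j \<bullet> y' = 0"
      proof (intro allI impI)
        fix j assume j: "j < n"
        have "col C j \<bullet> y = (\<Sum>k<Suc r. C $$ (k,j) * y $ k)" by (rule col_sp[OF C _ y]) (use j in simp)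
        also have "\<dots> = (\<Sum>k<r. C $$ (k,j) * y $ k) + C $$ (r,j) * y $ r" by simp
        also have "(\<Sum>k<r. C $$ (k,j) * y $ k) = (\<Sum>k<r. C' $$ (k,j) * y $ k)"
          using j by (auto simp: C_def intro!: sum.cong)
        finally have "col C j \<bullet> y = (\<Sum>k<r. C' $$ (k,j) * y $ k)" using j by (simp add: C_def)
        moreover have "col C' j \<bullet> y' = (\<Sum>k<r. C' $$ (k,j) * y $ k)" using y' C' j unfolding y'_def
          using col_sp[OF C' j y'] by (simp add: y'_def)
        ultimately show "col C' j \<bullet> y' = 0" using cy j by simp
      qed
      with Cinj y' have "y' = 0\<^sub>v r" by auto
      hence "\<And>i. i < r \<Longrightarrow> y $ i = 0" unfolding y'_def by (metis index_vec index_zero_vec(1))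
      thus "y = 0\<^sub>v (Suc r)" using yr y by (auto intro!: eq_vecI simp: less_Suc_eq)
    qed
    ultimately show ?thesis using B C by blast
  qed
qed



lemma self_sp_zero: "(w::real vec) \<bullet> w = 0 \<Longrightarrow> w = 0\<^sub>v (dim_vec w)"
proof -
  assume h: "w \<bullet> w = 0"
  have "(\<Sum>i\<in>{0..<dim_vec w}. w $ i * w $ i) = 0" using h unfolding scalar_prod_def by simp
  hence "\<forall>i\<in>{0..<dim_vec w}. w $ i * w $ i = 0"
    by (subst sum_nonneg_eq_0_iff[symmetric]) auto
  thus ?thesis by (auto intro!: eq_vecI)
qed

lemma gram_inv:
  fixes B :: "real mat"
  assumes B: "B \<in> carrier_mat m r" and inj: "\<forall>x\<in>carrier_vec r. B *\<^sub>v x = 0\<^sub>v m \<longrightarrow> x = 0\<^sub>v r"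
  shows "\<exists>Mi. Mi \<in> carrier_mat r r \<and> Mi * (transpose_mat B * B) = 1\<^sub>m r \<and>
     (transpose_mat B * B) * Mi = 1\<^sub>m r \<and> transpose_mat Mi = Mi"
proof -
  define M where "M = transpose_mat B * B"
  have M: "M \<in> carrier_mat r r" using B unfolding M_def by auto
  have "det M \<noteq> 0"
  proof
    assume "det M = 0"
    then obtain v where v: "v \<in> carrier_vec r" "v \<noteq> 0\<^sub>v r" "M *\<^sub>v v = 0\<^sub>v r"
      using det_0_iff_vec_prod_zero[OF M] by auto
    define w where "w = B *\<^sub>v v"
    have "M *\<^sub>v v = transpose_mat B *\<^sub>v w" unfolding M_def w_def
      using B v by (simp add: assoc_mult_mat_vec[of _ r m _ r])
    with v(3) have eq: "transpose_mat B *\<^sub>v w = 0\<^sub>v r" by simp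
    have "0 = (transpose_mat B *\<^sub>v w) \<bullet> v" using v(1) by (simp add: eq)
    also have "\<dots> = w \<bullet> w" unfolding w_def
      by (rule transpose_vec_mult_scalar[OF B v(1)]) (use B v in \<open>simp add: w_def\<close>)
    finally have "w = 0\<^sub>v (dim_vec w)" using self_sp_zero by simp
    hence "B *\<^sub>v v = 0\<^sub>v m" using B unfolding w_def by simp
    with inj v show False by auto
  qed
  from det_non_zero_imp_unit[OF M this, of "()"] obtain Mi where Mi: "Mi \<in> carrier_mat r r"
    and l: "Mi * M = 1\<^sub>m r" and rr: "M * Mi = 1\<^sub>m r"
    unfolding Units_def ring_mat_def by auto
  have MT: "transpose_mat M = M" using B unfolding M_def by (simp add: transpose_mult[of _ r m _ r])
  have "transpose_mat Mi * M = 1\<^sub>m r"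
  proof -
    have "transpose_mat Mi * M = transpose_mat Mi * transpose_mat M" using MT by simp
    also have "\<dots> = transpose_mat (M * Mi)" using M Mi by (simp add: transpose_mult)
    finally show ?thesis using rr by simp
  qed
  hence "transpose_mat Mi = Mi"
    using Mi M rr by (metis assoc_mult_mat left_mult_one_mat right_mult_one_mat transpose_carrier_mat)
  thus ?thesis using Mi l rr unfolding M_def by auto
qed

lemma MP_exists:
  fixes A :: "real mat"
  shows "\<exists>X. is_MP_inverse A X"
proof -
  define m where "m = dim_row A"
  define n where "n = dim_col A"
  have A: "A \<in> carrier_mat m n" unfolding m_def n_def by auto
  from rank_fact[OF A] obtain r B C where B: "B \<in> carrier_mat m r" and C: "C \<in> carrier_mat r n"
    and ABC: "A = B * C" and Binj: "\<forall>x\<in>carrier_vec r. B *\<^sub>v x = 0\<^sub>v m \<longrightarrow> x = 0\<^sub>v r"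
    and Cinj: "\<forall>y\<in>carrier_vec r. (\<forall>j<n. col C j \<bullet> y = 0) \<longrightarrow> y = 0\<^sub>v r" by blast
  have CT: "transpose_mat C \<in> carrier_mat n r" using C by simp
  have CTinj: "\<forall>y\<in>carrier_vec r. transpose_mat C *\<^sub>v y = 0\<^sub>v n \<longrightarrow> y = 0\<^sub>v r"
  proof (intro ballI impI)
    fix y :: "real vec" assume y: "y \<in> carrier_vec r" and h: "transpose_mat C *\<^sub>v y = 0\<^sub>v n"
    have "\<forall>j<n. col C j \<bullet> y = 0"
    proof (intro allI impI)
      fix j assume j: "j < n"
      have "(transpose_mat C *\<^sub>v y) $ j = 0" using h j by simp
      thus "col C j \<bullet> y = 0" using j C by simp
    qed
    thus "y = 0\<^sub>v r" using Cinj y by auto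
  qed
  obtain Mi where Mi: "Mi \<in> carrier_mat r r" and Ml: "Mi * (transpose_mat B * B) = 1\<^sub>m r"
    and MiT: "transpose_mat Mi = Mi" using gram_inv[OF B Binj] by blast
  obtain Ni where Ni: "Ni \<in> carrier_mat r r" and Nr: "(C * transpose_mat C) * Ni = 1\<^sub>m r"
    and NiT: "transpose_mat Ni = Ni" using gram_inv[OF CT CTinj] by auto
  have d: "dim_row A = m" "dim_col A = n" "dim_row B = m" "dim_col B = r" "dim_row C = r" "dim_col C = n"
    "dim_row Mi = r" "dim_col Mi = r" "dim_row Ni = r" "dim_col Ni = r"
    using A B C Mi Ni by auto
  have cN: "\<And>Z. dim_row Z = r \<Longrightarrow> C * (transpose_mat C * (Ni * Z)) = Z"
  proof -
    fix Z :: "real mat" assume Z: "dim_row Z = r"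
    have "C * (transpose_mat C * (Ni * Z)) = ((C * transpose_mat C) * Ni) * Z" by (simp add: massoc d Z)
    also have "\<dots> = Z" using Nr Z by (simp add: left_mult_one_mat')
    finally show "C * (transpose_mat C * (Ni * Z)) = Z" .
  qed
  have cM: "\<And>Z. dim_row Z = r \<Longrightarrow> Mi * (transpose_mat B * (B * Z)) = Z"
  proof -
    fix Z :: "real mat" assume Z: "dim_row Z = r"
    have "Mi * (transpose_mat B * (B * Z)) = (Mi * (transpose_mat B * B)) * Z" by (simp add: massoc d Z)
    also have "\<dots> = Z" using Ml Z by (simp add: left_mult_one_mat')
    finally show "Mi * (transpose_mat B * (B * Z)) = Z" .
  qed
  define X where "X = transpose_mat C * (Ni * (Mi * transpose_mat B))"
  have AX: "A * X = B * (Mi * transpose_mat B)" unfolding ABC X_def by (simp add: massoc d cN)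
  have XA: "X * A = transpose_mat C * (Ni * C)" unfolding ABC X_def by (simp add: massoc d cM)
  have "is_MP_inverse A X"
    unfolding is_MP_inverse_def
  proof (intro conjI)
    show "X \<in> carrier_mat (dim_col A) (dim_row A)" unfolding X_def using d by auto
    show "A * X * A = A" unfolding AX by (simp add: ABC massoc d cM)
    show "X * A * X = X" unfolding XA by (simp add: X_def massoc d cM cN)
    show "transpose_mat (A * X) = A * X" unfolding AX by (simp add: mtrans massoc d MiT)
    show "transpose_mat (X * A) = X * A" unfolding XA by (simp add: mtrans massoc d NiT)
  qed
  thus ?thesis by blast
qed

lemma MP_inverse_is: "is_MP_inverse A (MP_inverse A)"
  unfolding MP_inverse_def using MP_exists[of A] MP_unique[of A] by (metis theI)



lemma mvassoc: fixes A B :: "real mat" shows "dim_col A = dim_row B \<Longrightarrow> dim_col B = dim_vec v \<Longrightarrow> (A * B) *\<^sub>v v = A *\<^sub>v (B *\<^sub>v v)"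
  by (rule assoc_mult_mat_vec[of A "dim_row A" "dim_col A" B "dim_col B"]) auto

lemma colu: "M \<in> carrier_mat p q \<Longrightarrow> j < q \<Longrightarrow> col (M::real mat) j = M *\<^sub>v unit_vec q j"
  by (auto intro!: eq_vecI)

lemma range_proj:
  fixes A U G :: "real mat"
  assumes A: "A \<in> carrier_mat m n" and U: "U \<in> carrier_mat m n" and R: "mat_range U \<subseteq> mat_range A"
    and G: "is_MP_inverse A G"
  shows "(A * G) * U = U"
proof -
  have Gc: "G \<in> carrier_mat n m" and AGA: "A * G * A = A" using G A unfolding is_MP_inverse_def by auto
  show ?thesis
  proof (rule mat_col_eqI)
    fix j assume "j < dim_col U" hence j: "j < n" using U by auto
    have "col U j \<in> mat_range U" unfolding mat_range_def colu[OF U j] using U by auto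
    with R obtain x where x: "x \<in> carrier_vec n" and cx: "col U j = A *\<^sub>v x"
      unfolding mat_range_def using A by auto
    have "col ((A * G) * U) j = (A * G) *\<^sub>v col U j" by (rule col_mult2[of "A*G" m m U n j]) (use A Gc U j in auto)
    also have "\<dots> = (A * G * A) *\<^sub>v x" unfolding cx using A Gc x
      by (simp add: mvassoc)
    also have "\<dots> = col U j" using AGA cx by simp
    finally show "col ((A * G) * U) j = col U j" .
  qed (use A Gc U in auto)
qed

lemma ker_proj:
  fixes A U G :: "real mat"
  assumes A: "A \<in> carrier_mat m n" and U: "U \<in> carrier_mat m n" and K: "mat_kernel A \<subseteq> mat_kernel U"
    and G: "is_MP_inverse A G"
  shows "U * (G * A) = U"
proof -
  have Gc: "G \<in> carrier_mat n m" and AGA: "A * G * A = A" using G A unfolding is_MP_inverse_def by auto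
  show ?thesis
  proof (rule mat_col_eqI)
    fix j assume "j < dim_col U" hence j: "j < n" using U by auto
    define e where "e = (unit_vec n j :: real vec)"
    have e: "e \<in> carrier_vec n" unfolding e_def by simp
    define d where "d = e - (G * A) *\<^sub>v e"
    have d: "d \<in> carrier_vec n" unfolding d_def using e Gc A by auto
    have "A *\<^sub>v d = A *\<^sub>v e - (A * G * A) *\<^sub>v e" unfolding d_def using A Gc e
      by (simp add: mult_minus_distrib_mat_vec[of _ m n] assoc_mult_mat_vec[of _ m n _ n] assoc_mult_mat[of A m n G m A n])
    also have "\<dots> = 0\<^sub>v m" unfolding AGA using A e by simp
    finally have "d \<in> mat_kernel A" using d A unfolding mat_kernel_def by auto
    with K have "U *\<^sub>v d = 0\<^sub>v m" unfolding mat_kernel_def using U by auto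
    hence h: "U *\<^sub>v e - U *\<^sub>v ((G * A) *\<^sub>v e) = 0\<^sub>v m" unfolding d_def using U e Gc A
      by (simp add: mult_minus_distrib_mat_vec[of _ m n])
    have eq: "U *\<^sub>v e = U *\<^sub>v ((G * A) *\<^sub>v e)"
    proof (rule eq_vecI)
      fix i assume "i < dim_vec (U *\<^sub>v ((G * A) *\<^sub>v e))"
      hence i: "i < m" using U by simp
      have "(U *\<^sub>v e - U *\<^sub>v ((G * A) *\<^sub>v e)) $ i = 0\<^sub>v m $ i" using h by simp
      thus "(U *\<^sub>v e) $ i = (U *\<^sub>v ((G * A) *\<^sub>v e)) $ i" using i U by simp
    qed (use U in simp)
    have "col (U * (G * A)) j = U *\<^sub>v col (G * A) j" by (rule col_mult2[of U m n "G*A" n j]) (use A Gc U j in auto)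
    also have "\<dots> = U *\<^sub>v ((G * A) *\<^sub>v e)" using colu[of "G*A" n n j] Gc A j unfolding e_def by simp
    also have "\<dots> = col U j" using eq colu[OF U j] unfolding e_def by simp
    finally show "col (U * (G * A)) j = col U j" .
  qed (use A Gc U in auto)
qed



lemma sym_idem_eq:
  fixes P Q :: "real mat"
  assumes P: "P \<in> carrier_mat k k" and Q: "Q \<in> carrier_mat k k"
    and PT: "transpose_mat P = P" and QT: "transpose_mat Q = Q"
    and PQ: "P * Q = P" and QP: "Q * P = Q"
  shows "P = Q"
proof -
  have "P = transpose_mat (P * Q)" using PQ PT by simp
  also have "\<dots> = Q * P" using P Q PT QT by (simp add: transpose_mult)
  finally show ?thesis using QP by simp
qed

lemma sym_idem_eq2:
  fixes P Q :: "real mat"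
  assumes P: "P \<in> carrier_mat k k" and Q: "Q \<in> carrier_mat k k"
    and PT: "transpose_mat P = P" and QT: "transpose_mat Q = Q"
    and PQ: "P * Q = Q" and QP: "Q * P = P"
  shows "P = Q"
proof -
  have "P = transpose_mat (Q * P)" using QP PT by simp
  also have "\<dots> = P * Q" using P Q PT QT by (simp add: transpose_mult)
  finally show ?thesis using PQ by simp
qed

lemma splitting_ids:
  fixes A U V :: "real mat"
  assumes ps: "proper_splitting A U V"
  shows "MP_inverse U = MP_inverse A - (MP_inverse U * V) * MP_inverse A"
    and "MP_inverse U = MP_inverse A - MP_inverse A * (V * MP_inverse U)"
proof -
  define m where "m = dim_row A"
  define n where "n = dim_col A"
  define G where "G = MP_inverse A"
  define H where "H = MP_inverse U"
  have A: "A \<in> carrier_mat m n" unfolding m_def n_def by auto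
  note ps' = ps[unfolded proper_splitting_def]
  have U: "U \<in> carrier_mat m n" using ps' unfolding m_def n_def by blast
  have V: "V \<in> carrier_mat m n" using ps' unfolding m_def n_def by blast
  have AUV: "A = U - V" using ps' by blast
  have RU: "mat_range U = mat_range A" using ps' by blast
  have KU: "mat_kernel U = mat_kernel A" using ps' by blast
  have VUA: "V = U - A"
  proof (rule eq_matI)
    fix i j assume i: "i < dim_row (U - A)" and j: "j < dim_col (U - A)"
    have "A $$ (i,j) = U $$ (i,j) - V $$ (i,j)" using AUV i j U V by simp
    thus "V $$ (i,j) = (U - A) $$ (i,j)" using i j by simp
  qed (use U V A in simp_all)
  have G: "is_MP_inverse A G" unfolding G_def by (rule MP_inverse_is)
  have H: "is_MP_inverse U H" unfolding H_def by (rule MP_inverse_is)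
  have Gc: "G \<in> carrier_mat n m" and G1: "A * G * A = A" and G2: "G * A * G = G"
    and G3: "transpose_mat (A * G) = A * G" and G4: "transpose_mat (G * A) = G * A"
    using G A unfolding is_MP_inverse_def by auto
  have Hc: "H \<in> carrier_mat n m" and H1: "U * H * U = U" and H2: "H * U * H = H"
    and H3: "transpose_mat (U * H) = U * H" and H4: "transpose_mat (H * U) = H * U"
    using H U unfolding is_MP_inverse_def by auto
  have r1: "(A * G) * U = U" by (rule range_proj[OF A U _ G]) (use RU in simp)
  have r2: "(U * H) * A = A" by (rule range_proj[OF U A _ H]) (use RU in simp)
  have k1: "U * (G * A) = U" by (rule ker_proj[OF A U _ G]) (use KU in simp)
  have k2: "A * (H * U) = A" by (rule ker_proj[OF U A _ H]) (use KU in simp)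
  have d: "dim_row A = m" "dim_col A = n" "dim_row U = m" "dim_col U = n"
    "dim_row G = n" "dim_col G = m" "dim_row H = n" "dim_col H = m" 
    using A U Gc Hc by auto
  have PQ: "H * U = G * A"
  proof (rule sym_idem_eq[of _ n])
    show "H * U * (G * A) = H * U" using k1 by (simp add: massoc d)
    show "G * A * (H * U) = G * A" using k2 by (simp add: massoc d)
  qed (use H4 G4 d in auto)
  have PQ': "U * H = A * G"
  proof (rule sym_idem_eq2[of _ m])
    show "U * H * (A * G) = A * G" using r2 by (simp add: massoc[symmetric] d)
    show "A * G * (U * H) = U * H" using r1 by (simp add: massoc[symmetric] d)
  qed (use H3 G3 d in auto)
  have HUG: "H * U * G = G" using PQ G2 by simp
  have HAG: "H * A * G = H"
  proof -
    have "H * A * G = H * (A * G)" by (simp add: massoc d)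
    also have "\<dots> = H * U * H" unfolding PQ'[symmetric] by (simp add: massoc d)
    finally show ?thesis using H2 by simp
  qed
  have GUH: "G * U * H = G"
  proof -
    have "G * U * H = G * (A * G)" unfolding PQ'[symmetric] by (simp add: massoc d)
    thus ?thesis using G2 by (simp add: massoc d)
  qed
  have GAH: "G * A * H = H" using PQ H2 by simp
  have e1: "H * V * G = G - H"
  proof -
    have "H * V * G = H * U * G - H * A * G" unfolding VUA using U A Hc Gc
      by (simp add: mult_minus_distrib_mat[of _ n m] minus_mult_distrib_mat[of _ n n])
    thus ?thesis using HUG HAG by simp
  qed
  have e2: "G * (V * H) = G - H"
  proof -
    have "G * (V * H) = G * U * H - G * A * H" unfolding VUA using U A Hc Gc
      using mult_minus_distrib_mat[of G n m "U*H" m "A*H"]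
      by (simp add: minus_mult_distrib_mat[of _ m n] massoc d)
    thus ?thesis using GUH GAH by simp
  qed
  show "MP_inverse U = MP_inverse A - (MP_inverse U * V) * MP_inverse A"
    unfolding G_def[symmetric] H_def[symmetric] e1 using Gc Hc by (auto intro!: eq_matI)
  show "MP_inverse U = MP_inverse A - MP_inverse A * (V * MP_inverse U)"
    unfolding G_def[symmetric] H_def[symmetric] e2 using Gc Hc by (auto intro!: eq_matI)
qed



abbreviation mc :: "real mat \<Rightarrow> complex mat" where "mc M \<equiv> map_mat complex_of_real M"

lemma mv_entg: "B \<in> carrier_mat m r \<Longrightarrow> i < m \<Longrightarrow> v \<in> carrier_vec r \<Longrightarrow>
  ((B::'a::semiring_0 mat) *\<^sub>v v) $ i = (\<Sum>k<r. B $$ (i,k) * v $ k)"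
  by (subst index_mult_mat_vec) (auto simp: scalar_prod_def atLeast0LessThan intro!: sum.cong)

lemma SR1:
  fixes M :: "real mat"
  assumes M: "M \<in> carrier_mat n n" and z: "z \<in> carrier_vec n" "z \<noteq> 0\<^sub>v n"
    and ev: "mc M *\<^sub>v z = l \<cdot>\<^sub>v z"
  shows "cmod l \<le> rho M"
proof -
  have n: "n > 0" using z by (cases n) auto
  have Mc: "mc M \<in> carrier_mat n n" using M by simp
  have "eigenvector (mc M) z l" unfolding eigenvector_def using z ev M by auto
  hence "l \<in> spectrum (mc M)" unfolding spectrum_def eigenvalue_def by auto
  thus ?thesis unfolding rho_def using spectral_radius_mem_max(2)[OF Mc n] by auto
qed

lemma SR2:
  fixes M :: "real mat"
  assumes M: "M \<in> carrier_mat n n" and n: "n > 0"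
  shows "\<exists>l z. z \<in> carrier_vec n \<and> z \<noteq> 0\<^sub>v n \<and> mc M *\<^sub>v z = l \<cdot>\<^sub>v z \<and> cmod l = rho M"
proof -
  have Mc: "mc M \<in> carrier_mat n n" using M by simp
  from spectral_radius_mem_max(1)[OF Mc n] obtain l where l: "l \<in> spectrum (mc M)"
    and nl: "cmod l = rho M" unfolding rho_def by auto
  from l obtain z where "eigenvector (mc M) z l" unfolding spectrum_def eigenvalue_def by auto
  thus ?thesis using nl M unfolding eigenvector_def by auto
qed

lemma rho_nonneg: "M \<in> carrier_mat n n \<Longrightarrow> n > 0 \<Longrightarrow> rho M \<ge> 0"
  using SR2 by (metis norm_ge_zero)

lemma rho_transpose:
  fixes M :: "real mat"
  assumes M: "M \<in> carrier_mat n n"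
  shows "rho (transpose_mat M) = rho M"
proof -
  have Mc: "mc M \<in> carrier_mat n n" using M by simp
  have "spectrum (mc (transpose_mat M)) = spectrum (mc M)"
    using spectrum_root_char_poly[OF Mc] spectrum_root_char_poly[of "transpose_mat (mc M)" n] Mc
      char_poly_transpose_mat[OF Mc]
    by (simp add: map_mat_transpose[symmetric])
  thus ?thesis unfolding rho_def spectral_radius_def by simp
qed

lemma rho_transfer:
  fixes X Y :: "real mat"
  assumes X: "X \<in> carrier_mat p q" and Y: "Y \<in> carrier_mat q p" and p: "p > 0" and q: "q > 0"
  shows "rho (X * Y) \<le> rho (Y * X)"
proof -
  have XY: "X * Y \<in> carrier_mat p p" using X Y by auto
  have YX: "Y * X \<in> carrier_mat q q" using X Y by auto
  from SR2[OF XY p] obtain l z where z: "z \<in> carrier_vec p" "z \<noteq> 0\<^sub>v p"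
    and ev: "mc (X * Y) *\<^sub>v z = l \<cdot>\<^sub>v z" and nl: "cmod l = rho (X * Y)" by blast
  show ?thesis
  proof (cases "l = 0")
    case True
    thus ?thesis using nl rho_nonneg[OF YX q] by simp
  next
    case False
    have Xc: "mc X \<in> carrier_mat p q" and Yc: "mc Y \<in> carrier_mat q p" using X Y by auto
    have mXY: "mc (X * Y) = mc X * mc Y" using of_real_hom.mat_hom_mult[OF X Y] by simp
    have mYX: "mc (Y * X) = mc Y * mc X" using of_real_hom.mat_hom_mult[OF Y X] by simp
    define w where "w = mc Y *\<^sub>v z"
    have w: "w \<in> carrier_vec q" unfolding w_def using Yc z by auto
    have Xw: "mc X *\<^sub>v w = l \<cdot>\<^sub>v z" unfolding w_def using ev mXY Xc Yc z
      by (simp add: assoc_mult_mat_vec[of _ p q _ p])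
    have wnz: "w \<noteq> 0\<^sub>v q"
    proof
      assume "w = 0\<^sub>v q"
      moreover have "mc X *\<^sub>v 0\<^sub>v q = 0\<^sub>v p" by (rule eq_vecI) (use Xc in \<open>auto simp: scalar_prod_def\<close>)
      ultimately have lz: "l \<cdot>\<^sub>v z = 0\<^sub>v p" using Xw by simp
      have "z = 0\<^sub>v p"
      proof (rule eq_vecI)
        fix i assume "i < dim_vec (0\<^sub>v p :: complex vec)"
        hence i: "i < p" by simp
        have "(l \<cdot>\<^sub>v z) $ i = 0" using lz i by simp
        thus "z $ i = 0\<^sub>v p $ i" using i z False by simp
      qed (use z in simp)
      thus False using z by simp
    qed
    have "mc (Y * X) *\<^sub>v w = l \<cdot>\<^sub>v w"
      unfolding mYX using Xc Yc w z Xw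
      by (simp add: assoc_mult_mat_vec[of _ q p _ q] mult_mat_vec w_def)
    from SR1[OF YX w wnz this] show ?thesis using nl by simp
  qed
qed

lemma super_ev:
  fixes M :: "real mat"
  assumes M: "M \<in> carrier_mat n n" and n: "n > 0" and nn: "mat_nonneg M"
  shows "\<exists>x\<in>carrier_vec n. (\<forall>i<n. 0 \<le> x $ i) \<and> x \<noteq> 0\<^sub>v n \<and>
     (\<forall>i<n. rho M * x $ i \<le> (M *\<^sub>v x) $ i)"
proof -
  from SR2[OF M n] obtain l z where z: "z \<in> carrier_vec n" "z \<noteq> 0\<^sub>v n"
    and ev: "mc M *\<^sub>v z = l \<cdot>\<^sub>v z" and nl: "cmod l = rho M" by blast
  define x where "x = vec n (\<lambda>i. cmod (z $ i))"
  have x: "x \<in> carrier_vec n" unfolding x_def by simp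
  have Mc: "mc M \<in> carrier_mat n n" using M by simp
  have Mnn: "\<And>i k. i < n \<Longrightarrow> k < n \<Longrightarrow> 0 \<le> M $$ (i,k)" using nn M unfolding mat_nonneg_def by auto
  have "\<forall>i<n. rho M * x $ i \<le> (M *\<^sub>v x) $ i"
  proof (intro allI impI)
    fix i assume i: "i < n"
    have "rho M * x $ i = cmod ((l \<cdot>\<^sub>v z) $ i)" using i z nl unfolding x_def by (simp add: norm_mult)
    also have "\<dots> = cmod ((mc M *\<^sub>v z) $ i)" using ev by simp
    also have "(mc M *\<^sub>v z) $ i = (\<Sum>k<n. mc M $$ (i,k) * z $ k)" by (rule mv_entg[OF Mc i z(1)])
    also have "cmod \<dots> \<le> (\<Sum>k<n. cmod (mc M $$ (i,k) * z $ k))" by (rule norm_sum)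
    also have "\<dots> = (\<Sum>k<n. M $$ (i,k) * x $ k)"
      using i M Mnn by (auto simp: x_def norm_mult intro!: sum.cong)
    also have "\<dots> = (M *\<^sub>v x) $ i" by (rule mv_entg[OF M i x, symmetric])
    finally show "rho M * x $ i \<le> (M *\<^sub>v x) $ i" .
  qed
  moreover have "x \<noteq> 0\<^sub>v n"
  proof
    assume x0: "x = 0\<^sub>v n"
    have "z = 0\<^sub>v n"
    proof (rule eq_vecI)
      fix i assume "i < dim_vec (0\<^sub>v n :: complex vec)"
      hence i: "i < n" by simp
      have "x $ i = 0" using x0 i by simp
      thus "z $ i = 0\<^sub>v n $ i" using i unfolding x_def by simp
    qed (use z in simp)
    thus False using z by simp
  qed
  moreover have "\<forall>i<n. 0 \<le> x $ i" unfolding x_def by simp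
  ultimately show ?thesis using x by blast
qed

lemma smult_mv: "A \<in> carrier_mat p q \<Longrightarrow> v \<in> carrier_vec q \<Longrightarrow>
  (k \<cdot>\<^sub>m (A::'a::comm_ring_1 mat)) *\<^sub>v v = k \<cdot>\<^sub>v (A *\<^sub>v v)"
  by (rule eq_vecI) (auto simp: mv_entg[of _ p q] sum_distrib_left mult.assoc)

lemma pow_smult: "B \<in> carrier_mat m m \<Longrightarrow> (q \<cdot>\<^sub>m (B::real mat)) ^\<^sub>m k = (q ^ k) \<cdot>\<^sub>m (B ^\<^sub>m k)"
proof (induction k)
  case 0 thus ?case by (auto intro!: eq_matI)
next
  case (Suc k)
  have "(q \<cdot>\<^sub>m B) ^\<^sub>m Suc k = ((q ^ k) \<cdot>\<^sub>m (B ^\<^sub>m k)) * (q \<cdot>\<^sub>m B)" using Suc by simp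
  also have "\<dots> = (q ^ Suc k) \<cdot>\<^sub>m (B ^\<^sub>m Suc k)" using Suc.prems
    by (simp add: mult_smult_assoc_mat[of _ m m _ m] mult_smult_distrib[of _ m m _ m] mult.commute; auto intro!: eq_matI)
  finally show ?case .
qed

lemma pow_commute: "W \<in> carrier_mat m m \<Longrightarrow> (W::real mat) ^\<^sub>m k * W = W * W ^\<^sub>m k"
proof (induction k)
  case 0 thus ?case by simp
next
  case (Suc k)
  have "W ^\<^sub>m Suc k * W = (W ^\<^sub>m k * W) * W" by simp
  also have "\<dots> = (W * W ^\<^sub>m k) * W" using Suc by simp
  also have "\<dots> = W * (W ^\<^sub>m k * W)" using Suc.prems by (simp add: assoc_mult_mat[of _ m m _ m _ m])
  finally show ?case by simp
qed

lemma pow_nonneg: "W \<in> carrier_mat m m \<Longrightarrow> mat_nonneg W \<Longrightarrow> mat_nonneg (W ^\<^sub>m k)"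
proof (induction k)
  case 0 thus ?case unfolding mat_nonneg_def by auto
next
  case (Suc k)
  have P: "W ^\<^sub>m k \<in> carrier_mat m m" using Suc.prems by simp
  show ?case unfolding mat_nonneg_def
  proof (intro allI impI)
    fix i j assume i: "i < dim_row (W ^\<^sub>m Suc k)" and j: "j < dim_col (W ^\<^sub>m Suc k)"
    hence i: "i < m" and j: "j < m" using Suc.prems by auto
    have "(W ^\<^sub>m Suc k) $$ (i,j) = (\<Sum>l<m. (W ^\<^sub>m k) $$ (i,l) * W $$ (l,j))"
      using mm_ent[OF P i Suc.prems(1) j] by simp
    also have "\<dots> \<ge> 0" using Suc.IH[OF Suc.prems] Suc.prems i j unfolding mat_nonneg_def
      by (intro sum_nonneg mult_nonneg_nonneg) auto
    finally show "0 \<le> (W ^\<^sub>m Suc k) $$ (i,j)" .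
  qed
qed

lemma sub_vec:
  fixes S :: "real mat"
  assumes S: "S \<in> carrier_mat m m" and m: "m > 0" and nn: "mat_nonneg S" and t: "rho S < t"
  shows "\<exists>v\<in>carrier_vec m. (\<forall>i<m. 0 \<le> v $ i) \<and> v \<noteq> 0\<^sub>v m \<and>
     (\<forall>i<m. (S *\<^sub>v v) $ i \<le> t * v $ i)"
proof -
  define r where "r = rho S"
  have r0: "0 \<le> r" unfolding r_def by (rule rho_nonneg[OF S m])
  define s where "s = (r + t) / 2"
  have s0: "0 < s" and rs: "r < s" and st: "s < t" using r0 t unfolding s_def r_def by auto
  define B where "B = (1 / s) \<cdot>\<^sub>m S"
  have B: "B \<in> carrier_mat m m" unfolding B_def using S by simp
  have McS: "mc S = complex_of_real s \<cdot>\<^sub>m mc B"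
    by (rule eq_matI) (use s0 S in \<open>auto simp: B_def\<close>)
  have rB: "rho B < 1"
  proof -
    from SR2[OF B m] obtain l z where z: "z \<in> carrier_vec m" "z \<noteq> 0\<^sub>v m"
      and ev: "mc B *\<^sub>v z = l \<cdot>\<^sub>v z" and nl: "cmod l = rho B" by blast
    have "mc S *\<^sub>v z = (complex_of_real s * l) \<cdot>\<^sub>v z"
      unfolding McS using smult_mv[of "mc B" m m z "complex_of_real s"] B z ev
      by (auto simp: smult_smult_assoc)
    from SR1[OF S z this] have "s * cmod l \<le> r" using s0 unfolding r_def by (simp add: norm_mult)
    hence "s * cmod l < s" using rs by simp
    thus ?thesis using nl s0 by simp
  qed
  have McB: "mc B \<in> carrier_mat m m" using B by simp
  from spectral_radius_jnf_norm_bound_less_1_upper_triangular[OF McB] rB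
  obtain c where c: "\<And>k. norm_bound (mc B ^\<^sub>m k) c" unfolding rho_def by blast
  have Bk: "\<And>k i j. i < m \<Longrightarrow> j < m \<Longrightarrow> \<bar>(B ^\<^sub>m k) $$ (i,j)\<bar> \<le> c"
  proof -
    fix k i j assume i: "i < m" and j: "j < m"
    have "mc (B ^\<^sub>m k) = mc B ^\<^sub>m k" by (rule of_real_hom.mat_hom_pow[OF B])
    hence "norm ((mc B ^\<^sub>m k) $$ (i,j)) = \<bar>(B ^\<^sub>m k) $$ (i,j)\<bar>" using i j B
      by (metis index_map_mat(1) index_map_mat(2) index_map_mat(3) norm_of_real pow_mat_dim_square(1) pow_mat_dim_square(2))
    moreover have dm: "dim_row (mc B ^\<^sub>m k) = m" "dim_col (mc B ^\<^sub>m k) = m" using McB by auto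
    moreover have "norm_bound (mc B ^\<^sub>m k) c" by (rule c)
    hence "norm ((mc B ^\<^sub>m k) $$ (i,j)) \<le> c" unfolding norm_bound_def using i j dm by metis
    ultimately show "\<bar>(B ^\<^sub>m k) $$ (i,j)\<bar> \<le> c" by simp
  qed
  have c0: "0 \<le> c" using Bk[of 0 0 0] m by (meson abs_ge_zero order.trans)
  define q where "q = s / t"
  have q0: "0 < q" and q1: "q < 1" using s0 st unfolding q_def by auto
  define W where "W = (1 / t) \<cdot>\<^sub>m S"
  have W: "W \<in> carrier_mat m m" unfolding W_def using S by simp
  have WqB: "W = q \<cdot>\<^sub>m B" unfolding W_def B_def q_def using s0 st
    by (auto intro!: eq_matI)
  have Wnn: "mat_nonneg W" using nn s0 st S unfolding W_def mat_nonneg_def by auto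
  have Wk: "\<And>k i j. i < m \<Longrightarrow> j < m \<Longrightarrow> (W ^\<^sub>m k) $$ (i,j) \<le> q ^ k * c"
  proof -
    fix k i j assume i: "i < m" and j: "j < m"
    have "(W ^\<^sub>m k) $$ (i,j) = q ^ k * (B ^\<^sub>m k) $$ (i,j)" unfolding WqB pow_smult[OF B] using i j B by simp
    also have "\<dots> \<le> q ^ k * c" using Bk[OF i j, of k] q0
      by (intro mult_left_mono) auto
    finally show "(W ^\<^sub>m k) $$ (i,j) \<le> q ^ k * c" .
  qed
  have Wknn: "\<And>k i j. i < m \<Longrightarrow> j < m \<Longrightarrow> 0 \<le> (W ^\<^sub>m k) $$ (i,j)"
    using pow_nonneg[OF W Wnn] W unfolding mat_nonneg_def by auto
  obtain K0 where K0: "q ^ K0 < 1 / (real m * (c + 1))"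
    using real_arch_pow_inv[of "1 / (real m * (c + 1))" q] q1 m c0 by auto
  define K where "K = Suc K0"
  have qK: "q ^ K \<le> q ^ K0" unfolding K_def using q0 q1 by (simp add: mult_left_le_one_le)
  define ones where "ones = vec m (\<lambda>_. 1::real)"
  have ones: "ones \<in> carrier_vec m" unfolding ones_def by simp
  define d where "d = (\<lambda>l. W ^\<^sub>m l *\<^sub>v ones)"
  have d: "\<And>l. d l \<in> carrier_vec m" unfolding d_def using W ones by (metis mult_mat_vec_carrier pow_carrier_mat)
  have dnn: "\<And>l i. i < m \<Longrightarrow> 0 \<le> d l $ i"
  proof -
    fix l i assume i: "i < m"
    have "d l $ i = (\<Sum>j<m. (W ^\<^sub>m l) $$ (i,j) * ones $ j)" unfolding d_def
      by (rule mv_entg[of _ m m]) (use W i ones in auto)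
    also have "\<dots> \<ge> 0" using Wknn i unfolding ones_def by (intro sum_nonneg) auto
    finally show "0 \<le> d l $ i" .
  qed
  have d0: "\<And>i. i < m \<Longrightarrow> d 0 $ i = 1" unfolding d_def using W ones by (simp add: ones_def[symmetric]) (simp add: ones_def)
  have dS: "\<And>l. W *\<^sub>v d l = d (Suc l)"
  proof -
    fix l
    have "W *\<^sub>v d l = (W * W ^\<^sub>m l) *\<^sub>v ones" unfolding d_def using W ones
      by (simp add: assoc_mult_mat_vec[of _ m m _ m])
    also have "W * W ^\<^sub>m l = W ^\<^sub>m Suc l" using pow_commute[OF W, of l] by simp
    finally show "W *\<^sub>v d l = d (Suc l)" unfolding d_def .
  qed
  have dK: "\<And>i. i < m \<Longrightarrow> d K $ i \<le> 1"
  proof -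
    fix i assume i: "i < m"
    have "d K $ i = (\<Sum>j<m. (W ^\<^sub>m K) $$ (i,j) * ones $ j)" unfolding d_def
      by (rule mv_entg[of _ m m]) (use W i ones in auto)
    also have "\<dots> \<le> (\<Sum>j<m. q ^ K * c)" using Wk i unfolding ones_def by (intro sum_mono) auto
    also have "\<dots> = real m * (q ^ K * c)" by simp
    also have "\<dots> \<le> real m * (q ^ K0 * (c + 1))" using qK c0 q0
      by (intro mult_left_mono mult_mono) auto
    also have "\<dots> = q ^ K0 * (real m * (c + 1))" by simp
    also have "\<dots> \<le> 1"
    proof -
      have pos: "0 < real m * (c + 1)" using m c0 by simp
      have "q ^ K0 * (real m * (c + 1)) < 1 / (real m * (c + 1)) * (real m * (c + 1))"
        by (rule mult_strict_right_mono[OF K0 pos])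
      also have "\<dots> = 1" using pos m c0 by simp
      finally show ?thesis by simp
    qed
    finally show "d K $ i \<le> 1" .
  qed
  define v where "v = vec m (\<lambda>i. \<Sum>l<K. d l $ i)"
  have v: "v \<in> carrier_vec m" unfolding v_def by simp
  have vnn: "\<forall>i<m. 0 \<le> v $ i" unfolding v_def using dnn by (auto intro!: sum_nonneg)
  have Wv: "\<And>i. i < m \<Longrightarrow> (W *\<^sub>v v) $ i = (\<Sum>l<K. d (Suc l) $ i)"
  proof -
    fix i assume i: "i < m"
    have "(W *\<^sub>v v) $ i = (\<Sum>j<m. W $$ (i,j) * v $ j)" by (rule mv_entg[OF W i v])
    also have "\<dots> = (\<Sum>j<m. \<Sum>l<K. W $$ (i,j) * d l $ j)" unfolding v_def
      by (auto simp: sum_distrib_left intro!: sum.cong)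
    also have "\<dots> = (\<Sum>l<K. \<Sum>j<m. W $$ (i,j) * d l $ j)" by (rule sum.swap)
    also have "\<dots> = (\<Sum>l<K. (W *\<^sub>v d l) $ i)" using mv_entg[OF W i d] by simp
    also have "\<dots> = (\<Sum>l<K. d (Suc l) $ i)" using dS by simp
    finally show "(W *\<^sub>v v) $ i = (\<Sum>l<K. d (Suc l) $ i)" .
  qed
  have Wv_le: "\<And>i. i < m \<Longrightarrow> (W *\<^sub>v v) $ i \<le> v $ i"
  proof -
    fix i assume i: "i < m"
    have "(\<Sum>l<Suc K. d l $ i) = d 0 $ i + (\<Sum>l<K. d (Suc l) $ i)" by (rule sum.lessThan_Suc_shift)
    moreover have "(\<Sum>l<Suc K. d l $ i) = (\<Sum>l<K. d l $ i) + d K $ i" by simp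
    ultimately have "(\<Sum>l<K. d (Suc l) $ i) = (\<Sum>l<K. d l $ i) + d K $ i - 1" using d0[OF i] by simp
    thus "(W *\<^sub>v v) $ i \<le> v $ i" using Wv[OF i] dK[OF i] i unfolding v_def by simp
  qed
  have SW: "S = t \<cdot>\<^sub>m W" unfolding W_def using s0 st S by (auto intro!: eq_matI)
  have "\<forall>i<m. (S *\<^sub>v v) $ i \<le> t * v $ i"
  proof (intro allI impI)
    fix i assume i: "i < m"
    have "(S *\<^sub>v v) $ i = t * (W *\<^sub>v v) $ i" unfolding SW using smult_mv[OF W v, of t] i W by simp
    also have "\<dots> \<le> t * v $ i" using Wv_le[OF i] s0 st by (intro mult_left_mono) auto
    finally show "(S *\<^sub>v v) $ i \<le> t * v $ i" .
  qed
  moreover have "v \<noteq> 0\<^sub>v m"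
  proof
    assume "v = 0\<^sub>v m"
    hence "v $ 0 = 0" using m by simp
    moreover have "v $ 0 \<ge> d 0 $ 0"
    proof -
      have "v $ 0 = (\<Sum>l<Suc K0. d l $ 0)" unfolding v_def K_def using m by simp
      also have "\<dots> = d 0 $ 0 + (\<Sum>l<K0. d (Suc l) $ 0)" by (rule sum.lessThan_Suc_shift)
      finally show ?thesis using dnn[OF m] by (simp add: sum_nonneg)
    qed
    ultimately show False using d0[OF m] by simp
  qed
  ultimately show ?thesis using v vnn by blast
qed



lemma qform: "M \<in> carrier_mat n m \<Longrightarrow> u \<in> carrier_vec n \<Longrightarrow> v \<in> carrier_vec m \<Longrightarrow>
  u \<bullet> ((M::real mat) *\<^sub>v v) = (\<Sum>i<n. \<Sum>j<m. u $ i * M $$ (i,j) * v $ j)"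
proof -
  assume M: "M \<in> carrier_mat n m" and u: "u \<in> carrier_vec n" and v: "v \<in> carrier_vec m"
  have "u \<bullet> (M *\<^sub>v v) = (\<Sum>i<n. u $ i * (M *\<^sub>v v) $ i)" by (rule sp_r) (use M v in auto)
  also have "\<dots> = (\<Sum>i<n. u $ i * (\<Sum>j<m. M $$ (i,j) * v $ j))"
    by (intro sum.cong refl, subst mv_ent[OF M _ v]) auto
  also have "\<dots> = (\<Sum>i<n. \<Sum>j<m. u $ i * M $$ (i,j) * v $ j)"
    by (simp add: sum_distrib_left mult.assoc)
  finally show ?thesis .
qed

lemma q_mono:
  fixes M N :: "real mat"
  assumes M: "M \<in> carrier_mat n m" and N: "N \<in> carrier_mat n m" and u: "u \<in> carrier_vec n"
    and v: "v \<in> carrier_vec m" and un: "\<forall>i<n. 0 \<le> u $ i" and vn: "\<forall>j<m. 0 \<le> v $ j"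
    and le: "\<And>i j. i < n \<Longrightarrow> j < m \<Longrightarrow> M $$ (i,j) \<le> N $$ (i,j)"
  shows "u \<bullet> (M *\<^sub>v v) \<le> u \<bullet> (N *\<^sub>v v)"
  unfolding qform[OF M u v] qform[OF N u v]
  using un vn le by (intro sum_mono mult_right_mono mult_left_mono) auto

lemma q_strict:
  fixes M N :: "real mat"
  assumes M: "M \<in> carrier_mat n m" and N: "N \<in> carrier_mat n m" and u: "u \<in> carrier_vec n"
    and v: "v \<in> carrier_vec m" and un: "\<forall>i<n. 0 \<le> u $ i" and vn: "\<forall>j<m. 0 \<le> v $ j"
    and u0: "u \<noteq> 0\<^sub>v n" and v0: "v \<noteq> 0\<^sub>v m"
    and lt: "\<And>i j. i < n \<Longrightarrow> j < m \<Longrightarrow> M $$ (i,j) < N $$ (i,j)"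
  shows "u \<bullet> (M *\<^sub>v v) < u \<bullet> (N *\<^sub>v v)"
proof -
  have "\<exists>i<n. u $ i \<noteq> 0"
  proof (rule ccontr)
    assume "\<not> ?thesis" hence "u = 0\<^sub>v n" using u by (auto intro!: eq_vecI)
    with u0 show False by simp
  qed
  then obtain i0 where i0: "i0 < n" "u $ i0 \<noteq> 0" by blast
  have "\<exists>j<m. v $ j \<noteq> 0"
  proof (rule ccontr)
    assume "\<not> ?thesis" hence "v = 0\<^sub>v m" using v by (auto intro!: eq_vecI)
    with v0 show False by simp
  qed
  then obtain j0 where j0: "j0 < m" "v $ j0 \<noteq> 0" by blast
  have ui: "u $ i0 > 0" using i0 un by (simp add: order_le_neq_trans)
  have vj: "v $ j0 > 0" using j0 vn by (simp add: order_le_neq_trans)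
  have "(\<Sum>i<n. \<Sum>j<m. u $ i * N $$ (i,j) * v $ j) - (\<Sum>i<n. \<Sum>j<m. u $ i * M $$ (i,j) * v $ j)
      = (\<Sum>i<n. \<Sum>j<m. u $ i * (N $$ (i,j) - M $$ (i,j)) * v $ j)"
    by (simp add: sum_subtractf[symmetric] algebra_simps)
  also have "\<dots> > 0"
  proof (rule sum_pos2[of _ i0])
    show "0 < (\<Sum>j<m. u $ i0 * (N $$ (i0,j) - M $$ (i0,j)) * v $ j)"
    proof (rule sum_pos2[of _ j0])
      show "0 < u $ i0 * (N $$ (i0,j0) - M $$ (i0,j0)) * v $ j0" using ui vj lt[OF i0(1) j0(1)] by simp
      show "\<And>j. j \<in> {..<m} \<Longrightarrow> 0 \<le> u $ i0 * (N $$ (i0,j) - M $$ (i0,j)) * v $ j"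
        using un vn lt i0 by (simp add: less_imp_le)
    qed (use j0 in auto)
    show "\<And>i. i \<in> {..<n} \<Longrightarrow> 0 \<le> (\<Sum>j<m. u $ i * (N $$ (i,j) - M $$ (i,j)) * v $ j)"
      using un vn lt by (auto intro!: sum_nonneg simp: less_imp_le)
  qed (use i0 in auto)
  finally show ?thesis unfolding qform[OF M u v] qform[OF N u v] by simp
qed

lemma core:
  fixes G T S P1 P2 :: "real mat" and a :: real
  assumes G: "G \<in> carrier_mat n m" and Gnn: "mat_nonneg G"
    and T: "T \<in> carrier_mat n n" and Tnn: "mat_nonneg T"
    and S: "S \<in> carrier_mat m m" and Snn: "mat_nonneg S"
    and P1: "P1 = G - T * G" and P2: "P2 = G - G * S"
    and gt: "mat_gt P1 P2" and a0: "0 < a" and a1: "a < 1" and le: "mat_le P2 (a \<cdot>\<^sub>m P1)"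
    and n: "n > 0" and m: "m > 0" and rT: "rho T < 1"
  shows "rho T < rho S"
proof (rule ccontr)
  assume "\<not> rho T < rho S"
  hence rST: "rho S \<le> rho T" by simp
  define r1 where "r1 = rho T"
  define b where "b = 1 - a * (1 - r1)"
  have br1: "r1 < b"
  proof -
    have "0 < (1 - a) * (1 - r1)" using a1 rT unfolding r1_def by simp
    thus ?thesis unfolding b_def by (simp add: algebra_simps)
  qed
  define t where "t = (rho S + b) / 2"
  have tS: "rho S < t" and tb: "t < b" using rST br1 unfolding t_def r1_def by auto
  have TT: "transpose_mat T \<in> carrier_mat n n" using T by simp
  have TTnn: "mat_nonneg (transpose_mat T)" using Tnn T unfolding mat_nonneg_def by auto
  from super_ev[OF TT n TTnn] obtain u where u: "u \<in> carrier_vec n" and un: "\<forall>i<n. 0 \<le> u $ i"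
    and u0: "u \<noteq> 0\<^sub>v n" and uT: "\<forall>i<n. rho (transpose_mat T) * u $ i \<le> (transpose_mat T *\<^sub>v u) $ i"
    by blast
  have uT': "\<forall>i<n. r1 * u $ i \<le> (transpose_mat T *\<^sub>v u) $ i" using uT rho_transpose[OF T] unfolding r1_def by simp
  from sub_vec[OF S m Snn tS] obtain v where v: "v \<in> carrier_vec m" and vn: "\<forall>i<m. 0 \<le> v $ i"
    and v0: "v \<noteq> 0\<^sub>v m" and Sv: "\<forall>i<m. (S *\<^sub>v v) $ i \<le> t * v $ i" by blast
  define w where "w = G *\<^sub>v v"
  have w: "w \<in> carrier_vec n" unfolding w_def using G v by simp
  have wn: "\<And>i. i < n \<Longrightarrow> 0 \<le> w $ i"
  proof -
    fix i assume i: "i < n"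
    have "w $ i = (\<Sum>j<m. G $$ (i,j) * v $ j)" unfolding w_def by (rule mv_ent[OF G i v])
    also have "\<dots> \<ge> 0" using Gnn G vn i unfolding mat_nonneg_def by (auto intro!: sum_nonneg)
    finally show "0 \<le> w $ i" .
  qed
  define X where "X = u \<bullet> w"
  have X0: "0 \<le> X" unfolding X_def sp_r[OF w] using un wn by (auto intro!: sum_nonneg)
  have P1c: "P1 \<in> carrier_mat n m" unfolding P1 using G T by auto
  have P2c: "P2 \<in> carrier_mat n m" unfolding P2 using G S by auto
  have q1: "u \<bullet> (P1 *\<^sub>v v) \<le> (1 - r1) * X"
  proof -
    have "P1 *\<^sub>v v = w - T *\<^sub>v w" unfolding P1 w_def using G T v
      by (simp add: minus_mult_distrib_mat_vec[of _ n m] assoc_mult_mat_vec[of _ n n _ m])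
    hence e: "u \<bullet> (P1 *\<^sub>v v) = X - u \<bullet> (T *\<^sub>v w)" unfolding X_def using u w T
      by (simp add: scalar_prod_minus_distrib[of _ n])
    have e2: "u \<bullet> (T *\<^sub>v w) = (transpose_mat T *\<^sub>v u) \<bullet> w"
      by (rule transpose_vec_mult_scalar[OF T w u, symmetric])
    have "r1 * X = (\<Sum>i<n. r1 * u $ i * w $ i)" unfolding X_def sp_r[OF w]
      by (simp add: sum_distrib_left mult.assoc)
    also have "\<dots> \<le> (\<Sum>i<n. (transpose_mat T *\<^sub>v u) $ i * w $ i)"
      using uT' wn by (intro sum_mono mult_right_mono) auto
    also have "\<dots> = (transpose_mat T *\<^sub>v u) \<bullet> w" by (rule sp_r[OF w, symmetric])
    finally have "r1 * X \<le> u \<bullet> (T *\<^sub>v w)" using e2 by simp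
    thus ?thesis using e by (simp add: algebra_simps)
  qed
  have q2: "(1 - t) * X \<le> u \<bullet> (P2 *\<^sub>v v)"
  proof -
    have Svc: "S *\<^sub>v v \<in> carrier_vec m" using S v by simp
    have "P2 *\<^sub>v v = w - G *\<^sub>v (S *\<^sub>v v)" unfolding P2 w_def using G S v
      by (simp add: minus_mult_distrib_mat_vec[of _ n m] assoc_mult_mat_vec[of _ n m _ m])
    hence e: "u \<bullet> (P2 *\<^sub>v v) = X - u \<bullet> (G *\<^sub>v (S *\<^sub>v v))" unfolding X_def using u w G Svc
      by (simp add: scalar_prod_minus_distrib[of _ n])
    have "u \<bullet> (G *\<^sub>v (S *\<^sub>v v)) = (\<Sum>i<n. u $ i * (G *\<^sub>v (S *\<^sub>v v)) $ i)"
      by (rule sp_r) (use G Svc in simp)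
    also have "\<dots> \<le> (\<Sum>i<n. u $ i * (t * w $ i))"
    proof (intro sum_mono mult_left_mono)
      fix i assume "i \<in> {..<n}" hence i: "i < n" by simp
      have "(G *\<^sub>v (S *\<^sub>v v)) $ i = (\<Sum>j<m. G $$ (i,j) * (S *\<^sub>v v) $ j)" by (rule mv_ent[OF G i Svc])
      also have "\<dots> \<le> (\<Sum>j<m. G $$ (i,j) * (t * v $ j))"
        using Gnn G Sv i unfolding mat_nonneg_def by (intro sum_mono mult_left_mono) auto
      also have "\<dots> = t * w $ i" unfolding w_def mv_ent[OF G i v] by (simp add: sum_distrib_left algebra_simps)
      finally show "(G *\<^sub>v (S *\<^sub>v v)) $ i \<le> t * w $ i" .
      show "0 \<le> u $ i" using un i by simp
    qed
    also have "\<dots> = t * X" unfolding X_def sp_r[OF w] by (simp add: sum_distrib_left algebra_simps)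
    finally show ?thesis using e by (simp add: algebra_simps)
  qed
  have q12: "u \<bullet> (P2 *\<^sub>v v) < u \<bullet> (P1 *\<^sub>v v)"
    by (rule q_strict[OF P2c P1c u v un vn u0 v0]) (use gt P1c in \<open>auto simp: mat_gt_def\<close>)
  have aP1: "a \<cdot>\<^sub>m P1 \<in> carrier_mat n m" using P1c by simp
  have q2a: "u \<bullet> (P2 *\<^sub>v v) \<le> u \<bullet> ((a \<cdot>\<^sub>m P1) *\<^sub>v v)"
    by (rule q_mono[OF P2c aP1 u v un vn]) (use le P2c in \<open>auto simp: mat_le_def\<close>)
  also have "u \<bullet> ((a \<cdot>\<^sub>m P1) *\<^sub>v v) = a * (u \<bullet> (P1 *\<^sub>v v))"
    using smult_mv[OF P1c v, of a] u P1c v by simp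
  finally have q2a: "u \<bullet> (P2 *\<^sub>v v) \<le> a * (u \<bullet> (P1 *\<^sub>v v))" .
  have Xpos: "0 < X"
  proof (rule ccontr)
    assume "\<not> 0 < X" hence "X = 0" using X0 by simp
    thus False using q1 q2 q12 by simp
  qed
  have "a * (u \<bullet> (P1 *\<^sub>v v)) \<le> a * ((1 - r1) * X)" using q1 a0 by (intro mult_left_mono) auto
  hence "(1 - t) * X \<le> a * ((1 - r1) * X)" using q2 q2a by linarith
  hence "1 - t \<le> a * (1 - r1)" using Xpos by (simp add: mult.assoc[symmetric])
  thus False using tb unfolding b_def by simp
qed



lemma alpha_ex:
  fixes P1 P2 :: "real mat"
  assumes gt: "mat_gt P1 P2"
  shows "\<exists>a. 0 < a \<and> a < 1 \<and> mat_le P2 (a \<cdot>\<^sub>m P1)"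
proof -
  define n where "n = dim_row P1"
  define m where "m = dim_col P1"
  have d: "dim_row P2 = n" "dim_col P2 = m" and lt: "\<And>i j. i < n \<Longrightarrow> j < m \<Longrightarrow> P2 $$ (i,j) < P1 $$ (i,j)"
    using gt unfolding mat_gt_def n_def m_def by auto
  define I where "I = {(i,j). i < n \<and> j < m \<and> 0 < P1 $$ (i,j)}"
  have fI: "finite I" unfolding I_def by (rule finite_subset[of _ "{..<n} \<times> {..<m}"]) auto
  define R where "R = (\<lambda>(i,j). P2 $$ (i,j) / P1 $$ (i,j)) ` I"
  have fR: "finite (insert (1/2) R)" unfolding R_def using fI by simp
  define a where "a = Max (insert (1/2) R)"
  have a2: "1/2 \<le> a" unfolding a_def by (rule Max_ge[OF fR]) simp
  have R1: "\<forall>x\<in>insert (1/2) R. x < (1::real)"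
    unfolding R_def I_def using lt by (auto simp: divide_less_eq)
  have a1: "a < 1" unfolding a_def using Max_in[OF fR] R1 by blast
  have "mat_le P2 (a \<cdot>\<^sub>m P1)" unfolding mat_le_def
  proof (intro conjI allI impI)
    fix i j assume i: "i < dim_row P2" and j: "j < dim_col P2"
    hence i: "i < n" and j: "j < m" using d by auto
    show "P2 $$ (i,j) \<le> (a \<cdot>\<^sub>m P1) $$ (i,j)"
    proof (cases "0 < P1 $$ (i,j)")
      case True
      have "P2 $$ (i,j) / P1 $$ (i,j) \<in> R" unfolding R_def I_def using i j True by force
      hence "P2 $$ (i,j) / P1 $$ (i,j) \<le> a" unfolding a_def using fR by simp
      hence "P2 $$ (i,j) \<le> a * P1 $$ (i,j)" using True by (simp add: divide_le_eq)
      thus ?thesis using i j unfolding n_def m_def by simp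
    next
      case False
      have "P2 $$ (i,j) < P1 $$ (i,j)" by (rule lt[OF i j])
      also have "P1 $$ (i,j) \<le> a * P1 $$ (i,j)" using False a1
        by (simp add: mult_le_cancel_right1)
      finally show ?thesis using i j unfolding n_def m_def by simp
    qed
  qed (use d in \<open>auto simp: n_def m_def\<close>)
  thus ?thesis using a1 a2 by (intro exI[of _ a]) auto
qed

lemma gt_T: "mat_gt P1 P2 \<Longrightarrow> mat_gt (transpose_mat P1) (transpose_mat P2)"
  unfolding mat_gt_def by auto

lemma le_T: "mat_le P2 (a \<cdot>\<^sub>m P1) \<Longrightarrow> mat_le (transpose_mat P2) (a \<cdot>\<^sub>m transpose_mat P1)"
  unfolding mat_le_def by auto

lemma nn_T: "mat_nonneg M \<Longrightarrow> mat_nonneg (transpose_mat M)"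
  unfolding mat_nonneg_def by auto

lemma T_left: fixes G S :: "real mat" shows "G \<in> carrier_mat n m \<Longrightarrow> S \<in> carrier_mat m m \<Longrightarrow>
  transpose_mat (G - G * S) = transpose_mat G - transpose_mat S * transpose_mat G"
proof -
  assume G: "G \<in> carrier_mat n m" and S: "S \<in> carrier_mat m m"
  have e: "transpose_mat S * transpose_mat G = transpose_mat (G * S)"
    by (rule transpose_mult[OF G S, symmetric])
  show ?thesis unfolding e using G S by (auto intro!: eq_matI)
qed

lemma T_right: fixes G T :: "real mat" shows "G \<in> carrier_mat n m \<Longrightarrow> T \<in> carrier_mat n n \<Longrightarrow>
  transpose_mat (G - T * G) = transpose_mat G - transpose_mat G * transpose_mat T"
proof -
  assume G: "G \<in> carrier_mat n m" and T: "T \<in> carrier_mat n n"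
  have e: "transpose_mat G * transpose_mat T = transpose_mat (T * G)"
    by (rule transpose_mult[OF T G, symmetric])
  show ?thesis unfolding e using G T by (auto intro!: eq_matI)
qed

theorem theorem4p9:
  fixes A U1 V1 U2 V2 :: "real mat" and m n :: nat
  assumes "m > 0" and "n > 0"
    and "A \<in> carrier_mat m n"
    and "mat_nonneg (MP_inverse A)"
    and "(proper_nonneg_splitting_I A U1 V1 \<and> proper_nonneg_splitting_II A U2 V2) \<or>
         (proper_nonneg_splitting_II A U1 V1 \<and> proper_nonneg_splitting_I A U2 V2)"
    and "convergent_splitting U1 V1" and "convergent_splitting U2 V2"
    and "mat_gt (MP_inverse U1) (MP_inverse U2)"
  shows "(\<exists>\<alpha>::real. 0 < \<alpha> \<and> \<alpha> < 1 \<and> mat_le (MP_inverse U2) (\<alpha> \<cdot>\<^sub>m MP_inverse U1)) \<and>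
         rho (MP_inverse U1 * V1) < rho (MP_inverse U2 * V2) \<and>
         rho (MP_inverse U2 * V2) < 1"
proof -
  note m = assms(1) and n = assms(2) and A = assms(3) and Gnn = assms(4) and cases = assms(5)
    and c1 = assms(6) and c2 = assms(7) and gt = assms(8)
  define G where "G = MP_inverse A"
  define H1 where "H1 = MP_inverse U1"
  define H2 where "H2 = MP_inverse U2"
  from alpha_ex[OF gt] obtain a where a0: "0 < a" and a1: "a < 1"
    and le: "mat_le (MP_inverse U2) (a \<cdot>\<^sub>m MP_inverse U1)" by blast
  have ps1: "proper_splitting A U1 V1" and ps2: "proper_splitting A U2 V2"
    using cases unfolding proper_nonneg_splitting_I_def proper_nonneg_splitting_II_def by auto
  have U1: "U1 \<in> carrier_mat m n" and V1: "V1 \<in> carrier_mat m n"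
    using ps1 A unfolding proper_splitting_def by auto
  have U2: "U2 \<in> carrier_mat m n" and V2: "V2 \<in> carrier_mat m n"
    using ps2 A unfolding proper_splitting_def by auto
  have Gc: "G \<in> carrier_mat n m" using MP_inverse_is[of A] A unfolding G_def is_MP_inverse_def by auto
  have H1c: "H1 \<in> carrier_mat n m" using MP_inverse_is[of U1] U1 unfolding H1_def is_MP_inverse_def by auto
  have H2c: "H2 \<in> carrier_mat n m" using MP_inverse_is[of U2] U2 unfolding H2_def is_MP_inverse_def by auto
  have r1: "rho (H1 * V1) < 1" using c1 unfolding convergent_splitting_def H1_def .
  have r2: "rho (H2 * V2) < 1" using c2 unfolding convergent_splitting_def H2_def .
  have main: "rho (H1 * V1) < rho (H2 * V2)"
  proof (cases "proper_nonneg_splitting_I A U1 V1 \<and> proper_nonneg_splitting_II A U2 V2")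
    case True
    have Tnn: "mat_nonneg (H1 * V1)" using True unfolding proper_nonneg_splitting_I_def H1_def by auto
    have Snn: "mat_nonneg (V2 * H2)" using True unfolding proper_nonneg_splitting_II_def H2_def by auto
    have e1: "H1 = G - (H1 * V1) * G" using splitting_ids(1)[OF ps1] unfolding G_def H1_def .
    have e2: "H2 = G - G * (V2 * H2)" using splitting_ids(2)[OF ps2] unfolding G_def H2_def .
    have "rho (H1 * V1) < rho (V2 * H2)"
      by (rule core[OF Gc _ _ Tnn _ Snn e1 e2 _ a0 a1 _ n m r1])
         (use Gnn gt le H1c V1 V2 H2c in \<open>auto simp: G_def H1_def H2_def\<close>)
    also have "\<dots> \<le> rho (H2 * V2)" by (rule rho_transfer[OF V2 H2c m n])
    finally show ?thesis .
  next
    case False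
    hence cs: "proper_nonneg_splitting_II A U1 V1 \<and> proper_nonneg_splitting_I A U2 V2" using cases by blast
    have S1nn: "mat_nonneg (V1 * H1)" using cs unfolding proper_nonneg_splitting_II_def H1_def by auto
    have T2nn: "mat_nonneg (H2 * V2)" using cs unfolding proper_nonneg_splitting_I_def H2_def by auto
    have e1: "H1 = G - G * (V1 * H1)" using splitting_ids(2)[OF ps1] unfolding G_def H1_def .
    have e2: "H2 = G - (H2 * V2) * G" using splitting_ids(1)[OF ps2] unfolding G_def H2_def .
    have S1c: "V1 * H1 \<in> carrier_mat m m" using V1 H1c by auto
    have T2c: "H2 * V2 \<in> carrier_mat n n" using V2 H2c by auto
    have e1': "transpose_mat H1 = transpose_mat G - transpose_mat (V1 * H1) * transpose_mat G"
      using arg_cong[OF e1, of transpose_mat] T_left[OF Gc S1c] by simp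
    have e2': "transpose_mat H2 = transpose_mat G - transpose_mat G * transpose_mat (H2 * V2)"
      using arg_cong[OF e2, of transpose_mat] T_right[OF Gc T2c] by simp
    have rS1: "rho (V1 * H1) \<le> rho (H1 * V1)" by (rule rho_transfer[OF V1 H1c m n])
    have rS1': "rho (transpose_mat (V1 * H1)) < 1" using rS1 r1 rho_transpose[OF S1c] by simp
    have "rho (transpose_mat (V1 * H1)) < rho (transpose_mat (H2 * V2))"
      by (rule core[OF _ _ _ nn_T[OF S1nn] _ nn_T[OF T2nn] e1' e2' _ a0 a1 _ m n rS1'])
         (use Gnn gt le Gc S1c T2c in \<open>auto simp: G_def H1_def H2_def intro: nn_T gt_T le_T\<close>)
    hence "rho (V1 * H1) < rho (H2 * V2)" using rho_transpose[OF S1c] rho_transpose[OF T2c] by simp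
    moreover have "rho (H1 * V1) \<le> rho (V1 * H1)" by (rule rho_transfer[OF H1c V1 n m])
    ultimately show ?thesis by simp
  qed
  show ?thesis using a0 a1 le main r2 unfolding H1_def H2_def by blast
qed


end
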